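(* Let $K$ be a field, $I\subset R=K[x_1,\ldots,x_n]$ a monomial ideal, and $\mathfrak{p}$ a monomial prime ideal of $R$ containing $I$. If $I$ has the copersistence property, then the monomial localization $I(\mathfrak{p})\subset R(\mathfrak{p})$ has the copersistence property.
   Context: An ideal $I$ in a commutative Noetherian ring $R$ has the copersistence property if $\mathrm{Ass}_R(R/I^k)\supseteq\mathrm{Ass}_R(R/I^{k+1})$ for all $k\ge1$. For a monomial prime ideal $\mathfrak{p}=(x_{i_1},\ldots,x_{i_r})$, $R(\mathfrak{p})=K[x_{i_1},\ldots,x_{i_r}]$ and the monomial localization $I(\mathfrak{p})$ is the ideal of $R(\mathfrak{p})$ obtained as the image of $I$ under the $K$-algebra homomorphism $R\to R(\mathfrak{p})$ sending $x_j\mapsto1$ for all $x_j\notin\{x_{i_1},\ldots,x_{i_r}\}$ and fixing the other variables. *)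

theory Defs
  imports "HOL-Library.Poly_Mapping"
begin

text \<open>Polynomials over a field 'k in the variables x_i (i :: nat):
  a polynomial is a finitely supported map from monomials (exponent vectors,
  nat =>0 nat) to coefficients.\<close>

type_synonym 'k mpoly = "(nat \<Rightarrow>\<^sub>0 nat) \<Rightarrow>\<^sub>0 'k"

definition pvars :: "'k::zero mpoly \<Rightarrow> nat set" where
  "pvars p = (\<Union>m\<in>Poly_Mapping.keys p. Poly_Mapping.keys m)"

definition Pring :: "nat set \<Rightarrow> 'k::field mpoly set" where
  "Pring V = {p. pvars p \<subseteq> V}"

definition ideal_in :: "'a::comm_ring_1 set \<Rightarrow> 'a set \<Rightarrow> bool" where
  "ideal_in S I \<longleftrightarrow> I \<subseteq> S \<and> 0 \<in> I \<and> (\<forall>a\<in>I. \<forall>b\<in>I. a + b \<in> I)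
     \<and> (\<forall>r\<in>S. \<forall>a\<in>I. r * a \<in> I)"

definition gen_ideal :: "'a::comm_ring_1 set \<Rightarrow> 'a set \<Rightarrow> 'a set" where
  "gen_ideal S G = \<Inter>{I. ideal_in S I \<and> G \<subseteq> I}"

definition prime_ideal_in :: "'a::comm_ring_1 set \<Rightarrow> 'a set \<Rightarrow> bool" where
  "prime_ideal_in S P \<longleftrightarrow> ideal_in S P \<and> P \<noteq> S
     \<and> (\<forall>a\<in>S. \<forall>b\<in>S. a * b \<in> P \<longrightarrow> a \<in> P \<or> b \<in> P)"

fun ideal_pow :: "'a::comm_ring_1 set \<Rightarrow> 'a set \<Rightarrow> nat \<Rightarrow> 'a set" where
  "ideal_pow S I 0 = S"
| "ideal_pow S I (Suc k) = gen_ideal S {a * b | a b. a \<in> ideal_pow S I k \<and> b \<in> I}"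

text \<open>Ass_S(S/J): prime ideals of S of the form (J : f) for some f \<in> S.\<close>
definition Ass :: "'a::comm_ring_1 set \<Rightarrow> 'a set \<Rightarrow> 'a set set" where
  "Ass S J = {P. prime_ideal_in S P \<and> (\<exists>f\<in>S. P = {g\<in>S. g * f \<in> J})}"

definition copersistent :: "'a::comm_ring_1 set \<Rightarrow> 'a set \<Rightarrow> bool" where
  "copersistent S I \<longleftrightarrow>
     (\<forall>k\<ge>1. Ass S (ideal_pow S I (Suc k)) \<subseteq> Ass S (ideal_pow S I k))"

definition monomial :: "(nat \<Rightarrow>\<^sub>0 nat) \<Rightarrow> 'k::field mpoly" where
  "monomial m = Poly_Mapping.single m 1"

definition var :: "nat \<Rightarrow> 'k::field mpoly" where
  "var i = monomial (Poly_Mapping.single i 1)"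

definition monomial_ideal :: "nat set \<Rightarrow> 'k::field mpoly set \<Rightarrow> bool" where
  "monomial_ideal V I \<longleftrightarrow> ideal_in (Pring V) I \<and>
     (\<exists>M. M \<subseteq> {m. Poly_Mapping.keys m \<subseteq> V} \<and> I = gen_ideal (Pring V) (monomial ` M))"

definition monomial_prime :: "nat set \<Rightarrow> nat set \<Rightarrow> 'k::field mpoly set" where
  "monomial_prime V W = gen_ideal (Pring V) (var ` W)"

text \<open>Substitution x_j \<mapsto> 1 for j \<notin> W: on monomials, restrict the exponent vector to W.\<close>
definition restr_mon :: "nat set \<Rightarrow> (nat \<Rightarrow>\<^sub>0 nat) \<Rightarrow> (nat \<Rightarrow>\<^sub>0 nat)" where
  "restr_mon W m = Abs_poly_mapping (\<lambda>i. if i \<in> W then Poly_Mapping.lookup m i else 0)"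

definition loc_map :: "nat set \<Rightarrow> 'k::field mpoly \<Rightarrow> 'k mpoly" where
  "loc_map W p = (\<Sum>m\<in>Poly_Mapping.keys p. Poly_Mapping.single (restr_mon W m) (Poly_Mapping.lookup p m))"

definition mon_loc :: "nat set \<Rightarrow> 'k::field mpoly set \<Rightarrow> 'k mpoly set" where
  "mon_loc W I = loc_map W ` I"

end

theory Submission
  imports Defs
begin

abbreviation lkp where "lkp \<equiv> Poly_Mapping.lookup"
abbreviation kys where "kys \<equiv> Poly_Mapping.keys"
abbreviation sng where "sng \<equiv> Poly_Mapping.single"

type_synonym mon = "nat \<Rightarrow>\<^sub>0 nat"

lemma pring_iff: "p \<in> Pring V \<longleftrightarrow> (\<forall>m\<in>kys p. kys m \<subseteq> V)"
  by (auto simp: Pring_def pvars_def)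

lemma keys_mon_add: "kys ((a::mon) + b) = kys a \<union> kys b"
  by (auto simp: in_keys_iff lookup_add)

lemma pring_add: "p \<in> Pring V \<Longrightarrow> q \<in> Pring V \<Longrightarrow> p + q \<in> Pring V"
  using keys_add[of p q] by (auto simp: pring_iff)

lemma pring_diff: "p \<in> Pring V \<Longrightarrow> q \<in> Pring V \<Longrightarrow> p - q \<in> Pring V"
  using keys_diff[of p q] by (auto simp: pring_iff)

lemma pring_uminus: "p \<in> Pring V \<Longrightarrow> - p \<in> Pring V"
  by (auto simp: pring_iff)

lemma pring_mult: "(p::'k::field mpoly) \<in> Pring V \<Longrightarrow> q \<in> Pring V \<Longrightarrow> p * q \<in> Pring V"
  using keys_mult[of p q] by (fastforce simp: pring_iff keys_mon_add)

lemma pring_single: "kys m \<subseteq> V \<Longrightarrow> sng m c \<in> Pring V"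
  by (auto simp: pring_iff)

lemma pring_zero: "0 \<in> Pring V" by (auto simp: pring_iff)
lemma pring_one: "1 \<in> Pring V" by (auto simp: pring_iff)

lemma pring_sum: "(\<And>x. x \<in> A \<Longrightarrow> f x \<in> Pring V) \<Longrightarrow> sum f A \<in> Pring V"
  by (induction A rule: infinite_finite_induct) (auto intro: pring_zero pring_add)

lemma pm_expand: "p = (\<Sum>m\<in>kys p. sng m (lkp p m))"
proof (rule poly_mapping_eqI)
  fix k
  show "lkp p k = lkp (\<Sum>m\<in>kys p. sng m (lkp p m)) k"
    by (cases "k \<in> kys p") (auto simp: lookup_sum lookup_single when_def in_keys_iff)
qed

lemma single_monomial: "sng m c = sng 0 c * (monomial m :: 'k::field mpoly)"
  by (simp add: monomial_def mult_single)

lemma monomial_add: "(monomial (a + b) :: 'k::field mpoly) = monomial a * monomial b"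
  by (simp add: monomial_def mult_single)

lemma keys_monomial[simp]: "kys (monomial m :: 'k::field mpoly) = {m}"
  by (simp add: monomial_def)

lemma ideal_in_sum: "ideal_in S I \<Longrightarrow> (\<And>x. x \<in> A \<Longrightarrow> f x \<in> I) \<Longrightarrow> sum f A \<in> I"
  by (induction A rule: infinite_finite_induct) (auto simp: ideal_in_def)

lemma ideal_in_mult: "ideal_in S I \<Longrightarrow> r \<in> S \<Longrightarrow> a \<in> I \<Longrightarrow> r * a \<in> I"
  by (auto simp: ideal_in_def)

lemma ideal_in_add: "ideal_in S I \<Longrightarrow> a \<in> I \<Longrightarrow> b \<in> I \<Longrightarrow> a + b \<in> I"
  by (auto simp: ideal_in_def)

lemma ideal_in_sub: "ideal_in S I \<Longrightarrow> a \<in> I \<Longrightarrow> I \<subseteq> S"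
  by (auto simp: ideal_in_def)

lemma ideal_pring_diff: "ideal_in (Pring V) I \<Longrightarrow> a \<in> I \<Longrightarrow> b \<in> I \<Longrightarrow> a - b \<in> (I :: 'k::field mpoly set)"
proof -
  assume I: "ideal_in (Pring V) I" and a: "a \<in> I" and b: "b \<in> I"
  have m1: "-1 \<in> Pring V" by (rule pring_uminus[OF pring_one])
  have "(-1) * b \<in> I" by (rule ideal_in_mult[OF I m1 b])
  then have "- b \<in> I" by simp
  then have "a + - b \<in> I" using I a by (auto simp: ideal_in_def)
  then show ?thesis by simp
qed

lemma gen_ideal_eqI:
  assumes "ideal_in S J" "G \<subseteq> J" "\<And>I. ideal_in S I \<Longrightarrow> G \<subseteq> I \<Longrightarrow> J \<subseteq> I"
  shows "gen_ideal S G = J"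
  using assms unfolding gen_ideal_def by blast

definition dv :: "mon set \<Rightarrow> mon \<Rightarrow> bool" where
  "dv G m \<longleftrightarrow> (\<exists>g\<in>G. \<exists>d. m = g + d)"

definition MI :: "nat set \<Rightarrow> mon set \<Rightarrow> 'k::field mpoly set" where
  "MI V G = {p \<in> Pring V. \<forall>m\<in>kys p. dv G m}"

lemma dv_self: "g \<in> G \<Longrightarrow> dv G g"
  unfolding dv_def by (metis add_0_right)

definition mons :: "nat set \<Rightarrow> mon set" where
  "mons V = {m. kys m \<subseteq> V}"

lemma dv_add: "dv G m \<Longrightarrow> dv G (m + x)"
  unfolding dv_def by (metis add.assoc)

lemma dv_add': "dv G m \<Longrightarrow> dv G (x + m)"
  using dv_add[of G m x] by (simp add: add.commute)

lemma MI_ideal: "ideal_in (Pring V) (MI V G :: 'k::field mpoly set)"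
  unfolding ideal_in_def MI_def
proof (intro conjI ballI)
  show "0 \<in> {p \<in> Pring V. \<forall>m\<in>kys p. dv G m}" by (auto intro: pring_zero)
next
  fix a b :: "'k mpoly" assume "a \<in> {p \<in> Pring V. \<forall>m\<in>kys p. dv G m}" "b \<in> {p \<in> Pring V. \<forall>m\<in>kys p. dv G m}"
  then show "a + b \<in> {p \<in> Pring V. \<forall>m\<in>kys p. dv G m}"
    using keys_add[of a b] by (auto intro: pring_add)
next
  fix r a :: "'k mpoly" assume r: "r \<in> Pring V" and a: "a \<in> {p \<in> Pring V. \<forall>m\<in>kys p. dv G m}"
  show "r * a \<in> {p \<in> Pring V. \<forall>m\<in>kys p. dv G m}"
    using keys_mult[of r a] r a by (auto intro!: pring_mult dv_add')
qed auto

lemma MI_sub: "MI V G \<subseteq> Pring V" by (auto simp: MI_def)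

lemma monomial_in_MI: "kys m \<subseteq> V \<Longrightarrow> (monomial m \<in> MI V G) \<longleftrightarrow> dv G m"
  by (auto simp: MI_def monomial_def pring_single)

lemma MI_least:
  assumes I: "ideal_in (Pring V) I" and G: "G \<subseteq> mons V" and sub: "monomial ` G \<subseteq> I"
  shows "MI V G \<subseteq> (I :: 'k::field mpoly set)"
proof
  fix p :: "'k mpoly" assume p: "p \<in> MI V G"
  have "p = (\<Sum>m\<in>kys p. sng m (lkp p m))" by (rule pm_expand)
  also have "\<dots> \<in> I"
  proof (rule ideal_in_sum[OF I])
    fix m assume m: "m \<in> kys p"
    with p obtain g d where g: "g \<in> G" and md: "m = g + d" by (auto simp: MI_def dv_def)
    have mV: "kys m \<subseteq> V" using p m by (auto simp: MI_def pring_iff)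
    have dV: "kys d \<subseteq> V" using mV md by (auto simp: keys_mon_add)
    have "sng m (lkp p m) = sng d (lkp p m) * monomial g"
      by (simp add: md monomial_def mult_single add.commute)
    also have "\<dots> \<in> I" using sub g by (auto intro!: ideal_in_mult[OF I] pring_single dV)
    finally show "sng m (lkp p m) \<in> I" .
  qed
  finally show "p \<in> I" .
qed

lemma gen_ideal_MI:
  assumes "G \<subseteq> mons V"
  shows "gen_ideal (Pring V) (monomial ` G :: 'k::field mpoly set) = MI V G"
proof (rule gen_ideal_eqI)
  show "ideal_in (Pring V) (MI V G)" by (rule MI_ideal)
  show "monomial ` G \<subseteq> (MI V G :: 'k mpoly set)"
  proof safe
    fix x assume x: "x \<in> G"
    then have "kys x \<subseteq> V" using assms by (auto simp: mons_def)
    then show "monomial x \<in> (MI V G :: 'k mpoly set)" using x by (simp add: monomial_in_MI dv_self)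
  qed
  show "\<And>I. ideal_in (Pring V) I \<Longrightarrow> monomial ` G \<subseteq> I \<Longrightarrow> MI V G \<subseteq> I"
    using MI_least assms by blast
qed

lemma monomial_ideal_MI:
  assumes "monomial_ideal V I"
  obtains G where "G \<subseteq> mons V" "I = MI V G"
  using assms gen_ideal_MI unfolding monomial_ideal_def mons_def by blast

lemma Pring_MI0: "Pring V = MI V {0}"
  by (auto simp: MI_def dv_def)

fun Gp :: "mon set \<Rightarrow> nat \<Rightarrow> mon set" where
  "Gp G 0 = {0}"
| "Gp G (Suc k) = {a + b | a b. a \<in> Gp G k \<and> b \<in> G}"

lemma Gp_mons: "G \<subseteq> mons V \<Longrightarrow> Gp G k \<subseteq> mons V"
  by (induction k) (force simp: mons_def keys_mon_add)+

lemma MI_product: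
  assumes A: "A \<subseteq> mons V" and B: "B \<subseteq> mons V"
  shows "gen_ideal (Pring V) {a * b | a b. a \<in> MI V A \<and> b \<in> (MI V B :: 'k::field mpoly set)}
     = MI V {x + y | x y. x \<in> A \<and> y \<in> B}"
proof (rule gen_ideal_eqI)
  show "ideal_in (Pring V) (MI V {x + y |x y. x \<in> A \<and> y \<in> B})" by (rule MI_ideal)
  show "{a * b |a b. a \<in> MI V A \<and> b \<in> MI V B} \<subseteq> (MI V {x + y |x y. x \<in> A \<and> y \<in> B} :: 'k mpoly set)"
  proof safe
    fix a b :: "'k mpoly" assume a: "a \<in> MI V A" and b: "b \<in> MI V B"
    show "a * b \<in> MI V {x + y |x y. x \<in> A \<and> y \<in> B}"
      unfolding MI_def
    proof (intro CollectI conjI ballI)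
      show "a * b \<in> Pring V" using a b by (auto simp: MI_def intro: pring_mult)
      fix m assume "m \<in> kys (a * b)"
      then obtain u v where m: "m = u + v" and u: "u \<in> kys a" and v: "v \<in> kys b"
        using keys_mult[of a b] by auto
      obtain x d where "x \<in> A" "u = x + d" using a u by (auto simp: MI_def dv_def)
      moreover obtain y e where "y \<in> B" "v = y + e" using b v by (auto simp: MI_def dv_def)
      ultimately show "dv {x + y |x y. x \<in> A \<and> y \<in> B} m"
        unfolding dv_def m by (intro bexI[of _ "x + y"] exI[of _ "d + e"]) (auto simp: ac_simps)
    qed
  qed
  fix I :: "'k mpoly set" assume I: "ideal_in (Pring V) I" and sub: "{a * b |a b. a \<in> MI V A \<and> b \<in> MI V B} \<subseteq> I"
  show "MI V {x + y |x y. x \<in> A \<and> y \<in> B} \<subseteq> I"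
  proof (rule MI_least[OF I])
    show "{x + y |x y. x \<in> A \<and> y \<in> B} \<subseteq> mons V" using A B by (force simp: mons_def keys_mon_add)
    show "monomial ` {x + y |x y. x \<in> A \<and> y \<in> B} \<subseteq> I"
    proof safe
      fix x y assume x: "x \<in> A" and y: "y \<in> B"
      have "kys x \<subseteq> V" "kys y \<subseteq> V" using x A y B by (auto simp: mons_def)
      then have "monomial x \<in> (MI V A :: 'k mpoly set)" "monomial y \<in> (MI V B :: 'k mpoly set)"
        using x y by (simp_all add: monomial_in_MI dv_self)
      then have "monomial x * monomial y \<in> {a * b |a b. a \<in> MI V A \<and> b \<in> (MI V B :: 'k mpoly set)}"
        by auto
      with sub have "monomial x * monomial y \<in> I" by (rule subsetD)
      then show "monomial (x + y) \<in> I" by (simp add: monomial_add)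
    qed
  qed
qed

lemma ideal_pow_MI:
  assumes "G \<subseteq> mons V"
  shows "ideal_pow (Pring V) (MI V G :: 'k::field mpoly set) k = MI V (Gp G k)"
proof (induction k)
  case 0 then show ?case by (simp add: Pring_MI0)
next
  case (Suc k)
  have "ideal_pow (Pring V) (MI V G :: 'k::field mpoly set) (Suc k)
     = gen_ideal (Pring V) {a * b | a b. a \<in> MI V (Gp G k) \<and> b \<in> (MI V G :: 'k mpoly set)}"
    using Suc by simp
  also have "\<dots> = MI V (Gp G (Suc k))"
    using MI_product[OF Gp_mons[OF assms] assms] by simp
  finally show ?case .
qed



lemma lookup_restr: "lkp (restr_mon W m) i = (if i \<in> W then lkp m i else 0)"
proof -
  have "finite {i. (if i \<in> W then lkp m i else 0) \<noteq> 0}"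
    by (rule finite_subset[of _ "kys m"]) (auto simp: in_keys_iff)
  then show ?thesis unfolding restr_mon_def by simp
qed

lemma restr_add: "restr_mon W (a + b) = restr_mon W a + restr_mon W b"
  by (rule poly_mapping_eqI) (simp add: lookup_restr lookup_add)

lemma restr_id: "kys m \<subseteq> W \<Longrightarrow> restr_mon W m = m"
  by (rule poly_mapping_eqI) (auto simp: lookup_restr in_keys_iff)

lemma keys_restr: "kys (restr_mon W m) \<subseteq> W"
  by (auto simp: in_keys_iff lookup_restr split: if_splits)

lemma restr_zero: "restr_mon W 0 = 0"
  by (rule poly_mapping_eqI) (simp add: lookup_restr)

lemma loc_map_gen:
  assumes "finite S" "kys p \<subseteq> S"
  shows "loc_map W p = (\<Sum>m\<in>S. sng (restr_mon W m) (lkp p m))"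
  unfolding loc_map_def
  by (rule sum.mono_neutral_left) (use assms in \<open>auto simp: in_keys_iff\<close>)

lemma loc_map_add: "loc_map W (p + q) = loc_map W p + loc_map W q"
proof -
  let ?S = "kys p \<union> kys q"
  have "loc_map W (p + q) = (\<Sum>m\<in>?S. sng (restr_mon W m) (lkp (p + q) m))"
    using keys_add[of p q] by (intro loc_map_gen) auto
  also have "\<dots> = (\<Sum>m\<in>?S. sng (restr_mon W m) (lkp p m)) + (\<Sum>m\<in>?S. sng (restr_mon W m) (lkp q m))"
    by (simp add: lookup_add single_add sum.distrib)
  also have "\<dots> = loc_map W p + loc_map W q"
    by (subst (1 2) loc_map_gen[of ?S]) auto
  finally show ?thesis .
qed

lemma loc_map_zero: "loc_map W 0 = 0"
  by (simp add: loc_map_def)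

lemma loc_map_sum: "loc_map W (sum f A) = (\<Sum>x\<in>A. loc_map W (f x))"
  by (induction A rule: infinite_finite_induct) (auto simp: loc_map_zero loc_map_add)

lemma loc_map_single: "loc_map W (sng m c) = sng (restr_mon W m) c"
  by (simp add: loc_map_def)

lemma loc_map_pring: "loc_map W p \<in> Pring W"
  unfolding loc_map_def
  by (rule pring_sum) (rule pring_single[OF keys_restr])

lemma dv_pointwise: "(\<And>j. lkp a j \<le> lkp b j) \<Longrightarrow> \<exists>d. b = a + (d::mon)"
  by (rule exI[of _ "b - a"]) (auto intro!: poly_mapping_eqI simp: lookup_add lookup_minus)

lemma dv_le: "b = a + (d::mon) \<Longrightarrow> lkp a j \<le> lkp b j"
  by (simp add: lookup_add)

lemma loc_map_MI:
  assumes W: "W \<subseteq> V" and G: "G \<subseteq> mons V"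
  shows "loc_map W ` (MI V G :: 'k::field mpoly set) = MI W (restr_mon W ` G)"
proof
  show "loc_map W ` (MI V G :: 'k mpoly set) \<subseteq> MI W (restr_mon W ` G)"
  proof safe
    fix p :: "'k mpoly" assume p: "p \<in> MI V G"
    show "loc_map W p \<in> MI W (restr_mon W ` G)"
      unfolding MI_def
    proof (intro CollectI conjI ballI)
      show "loc_map W p \<in> Pring W" by (rule loc_map_pring)
      fix m' assume "m' \<in> kys (loc_map W p)"
      then obtain m where m: "m \<in> kys p" and m': "m' = restr_mon W m"
        using keys_sum[of "\<lambda>m. sng (restr_mon W m) (lkp p m)" "kys p"]
        by (auto simp: loc_map_def split: if_splits)
      obtain g d where "g \<in> G" "m = g + d" using p m by (auto simp: MI_def dv_def)
      then show "dv (restr_mon W ` G) m'" unfolding dv_def m'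
        by (auto simp: restr_add)
    qed
  qed
next
  show "MI W (restr_mon W ` G) \<subseteq> loc_map W ` (MI V G :: 'k mpoly set)"
  proof
    fix q :: "'k mpoly" assume q: "q \<in> MI W (restr_mon W ` G)"
    have "\<forall>m'\<in>kys q. \<exists>g. g \<in> G \<and> (\<exists>d. m' = restr_mon W g + d)"
      using q unfolding MI_def dv_def by blast
    then obtain gf where gf: "\<And>m'. m' \<in> kys q \<Longrightarrow> gf m' \<in> G \<and> (\<exists>d. m' = restr_mon W (gf m') + d)"
      by metis
    define df where "df m' = m' - restr_mon W (gf m')" for m'
    have mq: "m' = restr_mon W (gf m') + df m'" if mk: "m' \<in> kys q" for m'
    proof -
      obtain d where "m' = restr_mon W (gf m') + d" using gf[OF mk] by blast
      then show ?thesis unfolding df_def by (metis add_diff_cancel_left')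
    qed
    have qW: "kys m' \<subseteq> W" if "m' \<in> kys q" for m'
      using q that by (auto simp: MI_def pring_iff)
    have dW: "kys (df m') \<subseteq> W" if "m' \<in> kys q" for m'
      using qW[OF that] mq[OF that] by (metis keys_mon_add le_sup_iff)
    define p where "p = (\<Sum>m'\<in>kys q. sng (gf m' + df m') (lkp q m'))"
    have "p \<in> MI V G"
      unfolding p_def
    proof (rule ideal_in_sum[OF MI_ideal])
      fix m' assume m': "m' \<in> kys q"
      have gV: "kys (gf m') \<subseteq> V" using gf[OF m'] G by (auto simp: mons_def)
      have "kys (gf m' + df m') \<subseteq> V" using gV dW[OF m'] W by (auto simp: keys_mon_add)
      moreover have "dv G (gf m' + df m')" using gf[OF m'] by (auto simp: dv_def)
      ultimately show "sng (gf m' + df m') (lkp q m') \<in> (MI V G :: 'k mpoly set)"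
        by (auto simp: MI_def pring_single)
    qed
    moreover have "loc_map W p = q"
    proof -
      have "loc_map W p = (\<Sum>m'\<in>kys q. sng (restr_mon W (gf m' + df m')) (lkp q m'))"
        by (simp add: p_def loc_map_sum loc_map_single)
      also have "\<dots> = (\<Sum>m'\<in>kys q. sng m' (lkp q m'))"
      proof (rule sum.cong[OF refl])
        fix m' assume m': "m' \<in> kys q"
        have "restr_mon W (gf m' + df m') = m'"
          using mq[OF m'] dW[OF m']
          by (metis restr_add restr_id keys_restr) 
        then show "sng (restr_mon W (gf m' + df m')) (lkp q m') = sng m' (lkp q m')" by simp
      qed
      also have "\<dots> = q" by (rule pm_expand[symmetric])
      finally show ?thesis .
    qed
    ultimately show "q \<in> loc_map W ` MI V G" by blast
  qed
qed

lemma Gp_restr: "Gp (restr_mon W ` G) k = restr_mon W ` Gp G k"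
proof (induction k)
  case 0 then show ?case by (simp add: restr_zero)
next
  case (Suc k)
  show ?case
  proof
    show "Gp (restr_mon W ` G) (Suc k) \<subseteq> restr_mon W ` Gp G (Suc k)"
    proof
      fix x assume "x \<in> Gp (restr_mon W ` G) (Suc k)"
      then obtain a b where "a \<in> Gp G k" "b \<in> G" "x = restr_mon W a + restr_mon W b"
        using Suc by auto
      then show "x \<in> restr_mon W ` Gp G (Suc k)"
        by (auto simp: restr_add intro!: image_eqI[of _ _ "a + b"])
    qed
    show "restr_mon W ` Gp G (Suc k) \<subseteq> Gp (restr_mon W ` G) (Suc k)"
    proof
      fix x assume "x \<in> restr_mon W ` Gp G (Suc k)"
      then obtain a b where ab: "a \<in> Gp G k" "b \<in> G" "x = restr_mon W a + restr_mon W b"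
        by (auto simp: restr_add)
      have "restr_mon W a \<in> Gp (restr_mon W ` G) k" using Suc ab by auto
      moreover have "restr_mon W b \<in> restr_mon W ` G" using ab by auto
      ultimately show "x \<in> Gp (restr_mon W ` G) (Suc k)" using ab by auto
    qed
  next
  qed
qed

lemma restr_mons: "restr_mon W ` G \<subseteq> mons W"
  using keys_restr by (auto simp: mons_def)

lemma mult_single_expand: "h * sng w c = (\<Sum>m\<in>kys h. sng (m + w) (lkp h m * c))"
proof -
  have "h * sng w c = (\<Sum>m\<in>kys h. sng m (lkp h m)) * sng w c"
    by (subst pm_expand[of h]) (rule refl)
  also have "\<dots> = (\<Sum>m\<in>kys h. sng (m + w) (lkp h m * c))"
    by (simp add: sum_distrib_right mult_single)
  finally show ?thesis .
qed

lemma lookup_mult_shift: "lkp ((h::'k::field mpoly) * sng w c) (m + w) = lkp h m * c"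
proof -
  have "lkp (h * sng w c) (m + w) = (\<Sum>x\<in>kys h. if x = m then lkp h x * c else 0)"
    by (subst mult_single_expand) (simp add: lookup_sum lookup_single when_def add_right_cancel)
  also have "\<dots> = lkp h m * c"
    by (auto simp: in_keys_iff)
  finally show ?thesis .
qed

lemma keys_mult_shift: "kys (h * sng w c) \<subseteq> (\<lambda>m. m + w) ` kys h"
  using keys_mult[of h "sng w c"] by (auto split: if_splits)

lemma keys_mult_monomial: "kys (h * (monomial w :: 'k::field mpoly)) = (\<lambda>m. m + w) ` kys h"
proof
  show "kys (h * monomial w) \<subseteq> (\<lambda>m. m + w) ` kys h"
    unfolding monomial_def by (rule keys_mult_shift)
  show "(\<lambda>m. m + w) ` kys h \<subseteq> kys (h * monomial w)"
    unfolding monomial_def by (auto simp: in_keys_iff lookup_mult_shift)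
qed

lemma col_monomial:
  assumes "h \<in> Pring V" "kys w \<subseteq> V"
  shows "(h * (monomial w :: 'k::field mpoly) \<in> MI V G) \<longleftrightarrow> (\<forall>m\<in>kys h. dv G (m + w))"
proof -
  have "h * monomial w \<in> Pring V" using assms by (auto intro: pring_mult pring_single simp: monomial_def)
  then show ?thesis by (auto simp: MI_def keys_mult_monomial)
qed

lemma mult_expand2: "(a::'k::field mpoly) * b = (\<Sum>x\<in>kys a. \<Sum>y\<in>kys b. sng (x + y) (lkp a x * lkp b y))"
proof -
  have "a * b = (\<Sum>x\<in>kys a. sng x (lkp a x)) * (\<Sum>y\<in>kys b. sng y (lkp b y))"
    by (subst (1) pm_expand[of a], subst (1) pm_expand[of b]) (rule refl)
  also have "\<dots> = (\<Sum>x\<in>kys a. \<Sum>y\<in>kys b. sng (x + y) (lkp a x * lkp b y))"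
    by (simp add: sum_product mult_single)
  finally show ?thesis .
qed

lemma lead_key:
  fixes a b :: "'k::field mpoly"
  assumes "a \<noteq> 0" "b \<noteq> 0"
  shows "Max (kys a) + Max (kys b) \<in> kys (a * b)"
proof -
  let ?A = "Max (kys a)" and ?B = "Max (kys b)"
  have fa: "kys a \<noteq> {}" "kys b \<noteq> {}" using assms by auto
  have A: "?A \<in> kys a" "?B \<in> kys b" using fa by auto
  have le: "x \<le> ?A" if "x \<in> kys a" for x using that by auto
  have le2: "y \<le> ?B" if "y \<in> kys b" for y using that by auto
  have eq: "x + y = ?A + ?B \<longleftrightarrow> x = ?A \<and> y = ?B" if "x \<in> kys a" "y \<in> kys b" for x y
  proof
    assume h: "x + y = ?A + ?B"
    show "x = ?A \<and> y = ?B"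
    proof (rule ccontr)
      assume "\<not> (x = ?A \<and> y = ?B)"
      then have "x < ?A \<or> y < ?B" using le[OF that(1)] le2[OF that(2)] by auto
      then have "x + y < ?A + ?B"
        using le[OF that(1)] le2[OF that(2)] add_less_le_mono add_le_less_mono by blast
      then show False using h by simp
    qed
  qed auto
  have "lkp (a * b) (?A + ?B) = (\<Sum>x\<in>kys a. \<Sum>y\<in>kys b. if x = ?A \<and> y = ?B then lkp a x * lkp b y else 0)"
    by (subst mult_expand2) (auto simp: lookup_sum lookup_single when_def eq intro!: sum.cong)
  also have "\<dots> = (\<Sum>x\<in>kys a. if x = ?A then lkp a ?A * lkp b ?B else 0)"
  proof (rule sum.cong[OF refl])
    fix x assume "x \<in> kys a"
    show "(\<Sum>y\<in>kys b. if x = ?A \<and> y = ?B then lkp a x * lkp b y else 0)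
        = (if x = ?A then lkp a ?A * lkp b ?B else 0)"
      using A by (cases "x = ?A") (simp_all add: sum.delta')
  qed
  also have "\<dots> = lkp a ?A * lkp b ?B"
    using A by (simp add: sum.delta')
  also have "\<dots> \<noteq> 0" using A by (simp add: in_keys_iff)
  finally show ?thesis by (simp add: in_keys_iff)
qed

definition col :: "nat set \<Rightarrow> 'k::field mpoly set \<Rightarrow> 'k mpoly \<Rightarrow> 'k mpoly set" where
  "col V J f = {h \<in> Pring V. h * f \<in> J}"

definition trim :: "mon set \<Rightarrow> 'k::field mpoly \<Rightarrow> 'k mpoly" where
  "trim G f = (\<Sum>m\<in>{m\<in>kys f. \<not> dv G m}. sng m (lkp f m))"

definition graded :: "'k::field mpoly set \<Rightarrow> bool" where
  "graded P \<longleftrightarrow> (\<forall>h\<in>P. \<forall>m\<in>kys h. monomial m \<in> P)"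

lemma lookup_trim: "lkp (trim G f) m = (if dv G m then 0 else lkp f m)"
  by (cases "m \<in> kys f") (auto simp: trim_def lookup_sum lookup_single when_def in_keys_iff)

lemma keys_trim: "kys (trim G f) = {m\<in>kys f. \<not> dv G m}"
  by (auto simp: in_keys_iff lookup_trim split: if_splits)

lemma trim_pring: "f \<in> Pring V \<Longrightarrow> trim G f \<in> Pring V"
  by (auto simp: pring_iff keys_trim)

lemma minus_trim_MI: "f \<in> Pring V \<Longrightarrow> f - trim G f \<in> MI V G"
  unfolding MI_def
  by (auto intro!: pring_diff trim_pring simp: in_keys_iff lookup_minus lookup_trim split: if_splits)

lemma col_trim:
  assumes f: "f \<in> Pring V"
  shows "col V (MI V G) (trim G f) = col V (MI V G) f"
proof -
  have d: "h * f - h * trim G f \<in> MI V G" if "h \<in> Pring V" for h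
    using ideal_in_mult[OF MI_ideal that minus_trim_MI[OF f]] by (simp add: right_diff_distrib)
  show ?thesis
  proof safe
    fix h assume "h \<in> col V (MI V G) (trim G f)"
    then have h: "h \<in> Pring V" "h * trim G f \<in> MI V G" by (auto simp: col_def)
    have "(h * f - h * trim G f) + h * trim G f \<in> MI V G"
      by (rule ideal_in_add[OF MI_ideal d[OF h(1)] h(2)])
    then show "h \<in> col V (MI V G) f" using h by (simp add: col_def)
  next
    fix h assume "h \<in> col V (MI V G) f"
    then have h: "h \<in> Pring V" "h * f \<in> MI V G" by (auto simp: col_def)
    have "h * f - (h * f - h * trim G f) \<in> MI V G"
      by (rule ideal_pring_diff[OF MI_ideal h(2) d[OF h(1)]])
    then show "h \<in> col V (MI V G) (trim G f)" using h by (simp add: col_def)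
  qed
qed

lemma prime_one_notin:
  assumes "prime_ideal_in (Pring V) P"
  shows "(1 :: 'k::field mpoly) \<notin> P"
proof
  assume "1 \<in> P"
  then have "Pring V \<subseteq> P"
  proof -
    assume one: "1 \<in> P"
    { fix r :: "'k mpoly" assume "r \<in> Pring V"
      moreover have "ideal_in (Pring V) P" using assms by (simp add: prime_ideal_in_def)
      ultimately have "r * 1 \<in> P" using one by (metis ideal_in_mult)
      then have "r \<in> P" by simp }
    then show ?thesis by blast
  qed
  then show False using assms by (auto simp: prime_ideal_in_def ideal_in_def)
qed

lemma prime_prod:
  assumes P: "prime_ideal_in (Pring V) P" and A: "finite A"
    and f: "\<And>x. x \<in> A \<Longrightarrow> f x \<in> Pring V" and p: "prod f A \<in> (P :: 'k::field mpoly set)"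
  shows "\<exists>x\<in>A. f x \<in> P"
  using A f p
proof (induction A rule: finite_induct)
  case empty then show ?case using prime_one_notin[OF P] by simp
next
  case (insert x A)
  have "f x * prod f A \<in> P" using insert by simp
  moreover have "prod f A \<in> Pring V"
    using insert(4) by (induction A rule: infinite_finite_induct) (auto intro: pring_one pring_mult)
  ultimately have "f x \<in> P \<or> prod f A \<in> P"
    using P insert(4) by (auto simp: prime_ideal_in_def)
  then show ?case using insert by auto
qed

lemma monomial_pring: "kys m \<subseteq> V \<Longrightarrow> monomial m \<in> Pring V"
  by (simp add: monomial_def pring_single)

lemma card_shift_le: "finite A \<Longrightarrow> card ((\<lambda>m. m + (s::mon)) ` A) \<le> card A"
  by (rule card_image_le)

lemma graded_col:
  assumes G: "G \<subseteq> mons V"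
  shows "f \<in> Pring V \<Longrightarrow> prime_ideal_in (Pring V) (col V (MI V G) f)
     \<Longrightarrow> graded (col V (MI V G) (f :: 'k::field mpoly))"
proof (induction "card {m\<in>kys f. \<not> dv G m}" arbitrary: f rule: less_induct)
  case less
  note IH = less.hyps
  have fR: "f \<in> Pring V" by (rule less.prems(1))
  define f' where "f' = trim G f"
  define P where "P = col V (MI V G) f"
  have Pf': "col V (MI V G) f' = P" using col_trim[OF fR] by (simp add: f'_def P_def)
  have f'R: "f' \<in> Pring V" using trim_pring[OF fR] f'_def by simp
  have kf': "kys f' = {m\<in>kys f. \<not> dv G m}" by (simp add: f'_def keys_trim)
  have prime: "prime_ideal_in (Pring V) P" using less.prems(2) P_def by simp
  have Iid: "ideal_in (Pring V) P" using prime by (simp add: prime_ideal_in_def)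
  have PR: "P \<subseteq> Pring V" using Iid by (simp add: ideal_in_def)
  have zMI: "(0::'k mpoly) \<in> MI V G" by (simp add: MI_def pring_zero)
  have f'nz: "f' \<noteq> 0"
  proof
    assume "f' = 0"
    then have "P = Pring V" using Pf'[symmetric] zMI by (auto simp: col_def)
    then show False using prime by (simp add: prime_ideal_in_def)
  qed
  define M where "M = Max (kys f')"
  have Mk: "M \<in> kys f'" using f'nz by (simp add: M_def)
  have main: "\<forall>m\<in>kys a. monomial m \<in> P" if aP: "a \<in> P" for a
    using aP
  proof (induction "card (kys a)" arbitrary: a rule: less_induct)
    case (less a)
    show ?case
    proof (cases "a = 0")
      case True then show ?thesis by simp
    next
      case False
      define s where "s = Max (kys a)"
      have sk: "s \<in> kys a" using False by (simp add: s_def)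
      have aR: "a \<in> Pring V" using less.prems PR by blast
      have sV: "kys s \<subseteq> V" using aR sk by (auto simp: pring_iff)
      have "a * f' \<in> MI V G" using less.prems Pf' by (auto simp: col_def)
      moreover have "s + M \<in> kys (a * f')" unfolding s_def M_def by (rule lead_key[OF False f'nz])
      ultimately have dvsM: "dv G (s + M)" by (auto simp: MI_def)
      show ?thesis
      proof (cases "monomial s \<in> P")
        case True
        define as where "as = sng s (lkp a s)"
        have "sng 0 (lkp a s) * monomial s \<in> P"
          by (rule ideal_in_mult[OF Iid _ True]) (rule pring_single, simp)
        then have asP: "as \<in> P" by (simp add: as_def single_monomial[symmetric])
        define a' where "a' = a - as"
        have a'P: "a' \<in> P" unfolding a'_def by (rule ideal_pring_diff[OF Iid less.prems asP])
        have ka': "kys a' = kys a - {s}"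
          by (auto simp: a'_def as_def in_keys_iff lookup_minus lookup_single when_def split: if_splits)
        have "card (kys a') < card (kys a)"
          unfolding ka' using sk by (intro card_Diff1_less) auto
        then have "\<forall>m\<in>kys a'. monomial m \<in> P" using less.hyps a'P by blast
        then show ?thesis using True ka' by auto
      next
        case False
        define g where "g = f' * monomial s"
        have gR: "g \<in> Pring V" unfolding g_def by (rule pring_mult[OF f'R monomial_pring[OF sV]])
        have colg: "col V (MI V G) g = P"
        proof safe
          fix h assume "h \<in> col V (MI V G) g"
          then have h: "h \<in> Pring V" "(h * monomial s) * f' \<in> MI V G"
            by (auto simp: col_def g_def ac_simps)
          have hs: "h * monomial s \<in> Pring V" by (rule pring_mult[OF h(1) monomial_pring[OF sV]])
          then have "h * monomial s \<in> P" using h Pf' by (auto simp: col_def)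
          then show "h \<in> P" using prime h(1) monomial_pring[OF sV] False
            by (auto simp: prime_ideal_in_def)
        next
          fix h :: "'k mpoly" assume hP: "h \<in> P"
          then have hR: "h \<in> Pring V" using PR by blast
          have "monomial s * h \<in> P" by (rule ideal_in_mult[OF Iid monomial_pring[OF sV] hP])
          then have "(h * monomial s) * f' \<in> MI V G" using Pf' by (auto simp: col_def ac_simps)
          then show "h \<in> col V (MI V G) g" using hR by (simp add: col_def g_def ac_simps)
        qed
        have "{x\<in>kys g. \<not> dv G x} \<subseteq> (\<lambda>m. m + s) ` (kys f' - {M})"
        proof
          fix x assume x: "x \<in> {x\<in>kys g. \<not> dv G x}"
          then obtain m where m: "m \<in> kys f'" "x = m + s"
            by (auto simp: g_def keys_mult_monomial)
          have "m \<noteq> M" using x m dvsM by (auto simp: add.commute)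
          then show "x \<in> (\<lambda>m. m + s) ` (kys f' - {M})" using m by auto
        qed
        then have "card {x\<in>kys g. \<not> dv G x} \<le> card ((\<lambda>m. m + s) ` (kys f' - {M}))"
          by (intro card_mono) auto
        also have "\<dots> \<le> card (kys f' - {M})" by (intro card_shift_le) auto
        also have "\<dots> < card (kys f')" using Mk by (intro card_Diff1_less) auto
        finally have "card {x\<in>kys g. \<not> dv G x} < card {m\<in>kys f. \<not> dv G m}" by (simp add: kf')
        moreover have "prime_ideal_in (Pring V) (col V (MI V G) g)" using colg prime by simp
        ultimately have "graded (col V (MI V G) g)" using IH gR by blast
        then show ?thesis using colg less.prems by (auto simp: graded_def)
      qed
    qed
  qed
  show ?case using main unfolding graded_def P_def by blast
qed

definition E :: "nat set \<Rightarrow> mon set" where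
  "E T = {sng i 1 | i. i \<in> T}"

definition PT :: "nat set \<Rightarrow> nat set \<Rightarrow> 'k::field mpoly set" where
  "PT V T = MI V (E T)"

lemma dv_E: "dv (E T) m \<longleftrightarrow> (\<exists>i\<in>T. lkp m i > 0)"
proof
  assume "dv (E T) m"
  then obtain i d where "i \<in> T" "m = sng i 1 + d" by (auto simp: dv_def E_def)
  then have "lkp m i > 0" by (simp add: lookup_add)
  then show "\<exists>i\<in>T. lkp m i > 0" using \<open>i \<in> T\<close> by blast
next
  assume "\<exists>i\<in>T. lkp m i > 0"
  then obtain i where i: "i \<in> T" "lkp m i > 0" by blast
  have "\<exists>d. m = sng i 1 + d"
    by (rule dv_pointwise) (use i in \<open>auto simp: lookup_single when_def\<close>)
  then show "dv (E T) m" using i by (auto simp: dv_def E_def)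
qed

lemma E_mons: "T \<subseteq> V \<Longrightarrow> E T \<subseteq> mons V"
  by (auto simp: E_def mons_def)

lemma graded_mem:
  assumes "graded P" "ideal_in (Pring V) P" "h \<in> Pring V"
  shows "h \<in> P \<longleftrightarrow> (\<forall>m\<in>kys h. monomial m \<in> (P :: 'k::field mpoly set))"
proof
  assume "h \<in> P" then show "\<forall>m\<in>kys h. monomial m \<in> P" using assms(1) by (auto simp: graded_def)
next
  assume a: "\<forall>m\<in>kys h. monomial m \<in> P"
  have "h = (\<Sum>m\<in>kys h. sng 0 (lkp h m) * monomial m)"
    by (subst pm_expand) (simp add: single_monomial[symmetric])
  also have "\<dots> \<in> P"
    by (rule ideal_in_sum[OF assms(2)]) (use a in \<open>auto intro!: ideal_in_mult[OF assms(2)] pring_single\<close>)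
  finally show "h \<in> P" .
qed

lemma monomial_zero: "(monomial 0 :: 'k::field mpoly) = 1"
  by (simp add: monomial_def)

lemma monomial_sum: "(monomial (sum f A) :: 'k::field mpoly) = (\<Prod>x\<in>A. monomial (f x))"
  by (induction A rule: infinite_finite_induct) (auto simp: monomial_zero monomial_add)

lemma monomial_single_pow: "(monomial (sng i k) :: 'k::field mpoly) = var i ^ k"
proof (induction k)
  case 0 then show ?case by (simp add: monomial_zero)
next
  case (Suc k)
  have "sng i (Suc k) = sng i 1 + sng i k" by (simp add: single_add[symmetric])
  then show ?case using Suc by (simp add: monomial_add var_def)
qed

lemma pring_pow: "x \<in> Pring V \<Longrightarrow> (x :: 'k::field mpoly) ^ k \<in> Pring V"
  by (induction k) (auto intro: pring_one pring_mult)

lemma var_pring: "i \<in> V \<Longrightarrow> var i \<in> Pring V"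
  by (auto simp: var_def intro!: monomial_pring)

lemma prime_pow:
  assumes P: "prime_ideal_in (Pring V) P" and x: "x \<in> Pring V" and "x ^ k \<in> (P :: 'k::field mpoly set)"
  shows "x \<in> P"
proof -
  have "x ^ k = (\<Prod>j\<in>{..<k}. x)" by simp
  then have "\<exists>j\<in>{..<k}. x \<in> P" using prime_prod[OF P, of "{..<k}" "\<lambda>_. x"] x assms(3) by auto
  then show ?thesis by blast
qed

lemma prime_monomial:
  assumes P: "prime_ideal_in (Pring V) P" and m: "kys m \<subseteq> V"
  shows "monomial m \<in> (P :: 'k::field mpoly set) \<longleftrightarrow> (\<exists>i\<in>kys m. var i \<in> P)"
proof
  have Iid: "ideal_in (Pring V) P" using P by (simp add: prime_ideal_in_def)
  assume "monomial m \<in> P"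
  moreover have "monomial m = (\<Prod>i\<in>kys m. (var i ^ lkp m i :: 'k mpoly))"
    by (subst pm_expand) (simp add: monomial_sum monomial_single_pow)
  ultimately have "(\<Prod>i\<in>kys m. (var i ^ lkp m i :: 'k mpoly)) \<in> P" by simp
  then obtain i where i: "i \<in> kys m" "var i ^ lkp m i \<in> P"
    using prime_prod[OF P, of "kys m" "\<lambda>i. var i ^ lkp m i"] m
    by (auto intro!: pring_pow var_pring)
  then show "\<exists>i\<in>kys m. var i \<in> P" using prime_pow[OF P var_pring] m by blast
next
  have Iid: "ideal_in (Pring V) P" using P by (simp add: prime_ideal_in_def)
  assume "\<exists>i\<in>kys m. var i \<in> P"
  then obtain i where i: "i \<in> kys m" "var i \<in> P" by blast
  have "\<exists>d. m = sng i 1 + d"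
    by (rule dv_pointwise) (use i(1) in \<open>auto simp: lookup_single when_def in_keys_iff\<close>)
  then obtain d where d: "m = sng i 1 + d" by blast
  have dV: "kys d \<subseteq> V" using m d by (auto simp: keys_mon_add)
  have "monomial d * var i \<in> P" by (rule ideal_in_mult[OF Iid monomial_pring[OF dV] i(2)])
  then show "monomial m \<in> P" by (simp add: d monomial_add var_def ac_simps)
qed

lemma graded_prime_PT:
  assumes P: "prime_ideal_in (Pring V) P" and gr: "graded (P :: 'k::field mpoly set)"
  shows "P = PT V {i\<in>V. var i \<in> P}"
proof -
  have Iid: "ideal_in (Pring V) P" using P by (simp add: prime_ideal_in_def)
  have PR: "P \<subseteq> Pring V" using Iid by (simp add: ideal_in_def)
  have mon: "monomial m \<in> P \<longleftrightarrow> dv (E {i\<in>V. var i \<in> P}) m" if "kys m \<subseteq> V" for m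
    using that by (auto simp: prime_monomial[OF P that] dv_E in_keys_iff)
  show ?thesis
  proof safe
    fix h :: "'k mpoly" assume hP: "h \<in> P"
    then have hR: "h \<in> Pring V" using PR by blast
    then show "h \<in> PT V {i\<in>V. var i \<in> P}"
      using graded_mem[OF gr Iid hR] hP mon by (auto simp: PT_def MI_def pring_iff)
  next
    fix h :: "'k mpoly" assume "h \<in> PT V {i\<in>V. var i \<in> P}"
    then have hR: "h \<in> Pring V" and hd: "\<forall>m\<in>kys h. dv (E {i\<in>V. var i \<in> P}) m"
      by (auto simp: PT_def MI_def)
    then show "h \<in> P"
      using graded_mem[OF gr Iid hR] mon by (auto simp: pring_iff)
  qed
qed

lemma mono_witness:
  assumes G: "G \<subseteq> mons V" and f: "f \<in> Pring V"
    and P: "prime_ideal_in (Pring V) P" and Pc: "P = col V (MI V G) f"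
    and gr: "graded (P :: 'k::field mpoly set)"
  shows "\<exists>w. kys w \<subseteq> V \<and> P = col V (MI V G) (monomial w)"
proof -
  have Iid: "ideal_in (Pring V) P" using P by (simp add: prime_ideal_in_def)
  have fk: "kys m \<subseteq> V" if "m \<in> kys f" for m using f that by (auto simp: pring_iff)
  have "\<exists>m0\<in>kys f. \<forall>v. kys v \<subseteq> V \<longrightarrow> dv G (v + m0) \<longrightarrow> monomial v \<in> P"
  proof (rule ccontr)
    assume "\<not> ?thesis"
    then have "\<forall>m\<in>kys f. \<exists>v. kys v \<subseteq> V \<and> dv G (v + m) \<and> monomial v \<notin> P" by blast
    then obtain vf where vf: "\<And>m. m \<in> kys f \<Longrightarrow> kys (vf m) \<subseteq> V \<and> dv G (vf m + m) \<and> monomial (vf m) \<notin> P"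
      by metis
    define v where "v = (\<Sum>m\<in>kys f. vf m)"
    have vV: "kys v \<subseteq> V"
    proof -
      have "\<And>A. A \<subseteq> kys f \<Longrightarrow> kys (\<Sum>m\<in>A. vf m) \<subseteq> V"
      proof -
        fix A assume "A \<subseteq> kys f"
        then show "kys (\<Sum>m\<in>A. vf m) \<subseteq> V"
          by (induction A rule: infinite_finite_induct) (use vf in \<open>auto simp: keys_mon_add\<close>)
      qed
      then show ?thesis by (simp add: v_def)
    qed
    have "\<forall>m\<in>kys f. dv G (m + v)"
    proof
      fix m assume m: "m \<in> kys f"
      have "v = vf m + (\<Sum>x\<in>kys f - {m}. vf x)"
        unfolding v_def using m by (simp add: sum.remove)
      then have "m + v = (vf m + m) + (\<Sum>x\<in>kys f - {m}. vf x)" by (simp add: ac_simps)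
      then show "dv G (m + v)" using vf[OF m] dv_add[of G "vf m + m"] by metis
    qed
    then have "f * monomial v \<in> MI V G" using col_monomial[OF f vV] by simp
    then have "monomial v \<in> P" using Pc monomial_pring[OF vV] by (auto simp: col_def ac_simps)
    then have "(\<Prod>m\<in>kys f. (monomial (vf m) :: 'k mpoly)) \<in> P" by (simp add: v_def monomial_sum)
    moreover have "\<And>m. m \<in> kys f \<Longrightarrow> (monomial (vf m) :: 'k mpoly) \<in> Pring V"
      using vf monomial_pring by blast
    ultimately obtain m where "m \<in> kys f" "monomial (vf m) \<in> P"
      using prime_prod[OF P, of "kys f" "\<lambda>m. monomial (vf m)"] by auto
    then show False using vf by blast
  qed
  then obtain m0 where m0: "m0 \<in> kys f" and m0P: "\<And>v. kys v \<subseteq> V \<Longrightarrow> dv G (v + m0) \<Longrightarrow> monomial v \<in> P"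
    by blast
  have m0V: "kys m0 \<subseteq> V" by (rule fk[OF m0])
  show ?thesis
  proof (intro exI conjI)
    show "kys m0 \<subseteq> V" by (rule m0V)
    show "P = col V (MI V G) (monomial m0)"
    proof safe
      fix h :: "'k mpoly" assume hP: "h \<in> P"
      then have hR: "h \<in> Pring V" using Iid by (auto simp: ideal_in_def)
      have "\<forall>m\<in>kys h. dv G (m + m0)"
      proof
        fix m assume m: "m \<in> kys h"
        then have "monomial m \<in> P" using gr hP by (auto simp: graded_def)
        moreover have mV: "kys m \<subseteq> V" using hR m by (auto simp: pring_iff)
        ultimately have "f * monomial m \<in> MI V G" using Pc by (auto simp: col_def ac_simps)
        then have "\<forall>x\<in>kys f. dv G (x + m)" using col_monomial[OF f mV] by simp
        then show "dv G (m + m0)" using m0 by (simp add: ac_simps)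
      qed
      then show "h \<in> col V (MI V G) (monomial m0)"
        using col_monomial[OF hR m0V] hR by (simp add: col_def)
    next
      fix h :: "'k mpoly" assume "h \<in> col V (MI V G) (monomial m0)"
      then have hR: "h \<in> Pring V" and hd: "\<forall>m\<in>kys h. dv G (m + m0)"
        using col_monomial[OF _ m0V] by (auto simp: col_def)
      have "\<forall>m\<in>kys h. monomial m \<in> P"
        using hd hR m0P by (auto simp: pring_iff)
      then show "h \<in> P" using graded_mem[OF gr Iid hR] by simp
    qed
  qed
qed

lemma PT_prime:
  assumes T: "T \<subseteq> V"
  shows "prime_ideal_in (Pring V) (PT V T :: 'k::field mpoly set)"
  unfolding prime_ideal_in_def
proof (intro conjI ballI impI)
  show "ideal_in (Pring V) (PT V T :: 'k mpoly set)" by (simp add: PT_def MI_ideal)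
  have "(1::'k mpoly) \<notin> PT V T" by (auto simp: PT_def MI_def dv_E)
  then show "(PT V T :: 'k mpoly set) \<noteq> Pring V" using pring_one by blast
next
  fix a b :: "'k mpoly"
  assume aR: "a \<in> Pring V" and bR: "b \<in> Pring V" and ab: "a * b \<in> PT V T"
  let ?I = "PT V T :: 'k mpoly set"
  have Iid: "ideal_in (Pring V) ?I" by (simp add: PT_def MI_ideal)
  show "a \<in> ?I \<or> b \<in> ?I"
  proof (rule ccontr)
    assume "\<not> ?thesis"
    then have na: "a \<notin> ?I" and nb: "b \<notin> ?I" by auto
    define a' where "a' = trim (E T) a"
    define b' where "b' = trim (E T) b"
    have a'R: "a' \<in> Pring V" using trim_pring[OF aR] by (simp add: a'_def)
    have b'R: "b' \<in> Pring V" using trim_pring[OF bR] by (simp add: b'_def)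
    have da: "a - a' \<in> ?I" using minus_trim_MI[OF aR] by (simp add: a'_def PT_def)
    have db: "b - b' \<in> ?I" using minus_trim_MI[OF bR] by (simp add: b'_def PT_def)
    have a'nz: "a' \<noteq> 0" using da na by auto
    have b'nz: "b' \<noteq> 0" using db nb by auto
    have e: "a' * b' = a * b - ((a - a') * b + a' * (b - b'))" by (simp add: algebra_simps)
    have "(a - a') * b \<in> ?I" using ideal_in_mult[OF Iid bR da] by (simp add: ac_simps)
    moreover have "a' * (b - b') \<in> ?I" by (rule ideal_in_mult[OF Iid a'R db])
    ultimately have "(a - a') * b + a' * (b - b') \<in> ?I" by (rule ideal_in_add[OF Iid])
    then have "a' * b' \<in> ?I" unfolding e by (rule ideal_pring_diff[OF Iid ab])
    moreover have "Max (kys a') + Max (kys b') \<in> kys (a' * b')" by (rule lead_key[OF a'nz b'nz])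
    ultimately have "dv (E T) (Max (kys a') + Max (kys b'))" by (auto simp: PT_def MI_def)
    then obtain i where "i \<in> T" "lkp (Max (kys a')) i > 0 \<or> lkp (Max (kys b')) i > 0"
      by (auto simp: dv_E lookup_add)
    then have "dv (E T) (Max (kys a')) \<or> dv (E T) (Max (kys b'))" by (auto simp: dv_E)
    moreover have "Max (kys a') \<in> kys a'" "Max (kys b') \<in> kys b'" using a'nz b'nz by auto
    ultimately show False by (auto simp: a'_def b'_def keys_trim)
  qed
qed

lemma PT_col_eq:
  assumes w: "kys w \<subseteq> V" and eq: "\<And>m. kys m \<subseteq> V \<Longrightarrow> dv (E T) m \<longleftrightarrow> dv G (m + w)"
  shows "(PT V T :: 'k::field mpoly set) = col V (MI V G) (monomial w)"
proof safe
  fix h :: "'k mpoly" assume "h \<in> PT V T"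
  then have hR: "h \<in> Pring V" and hd: "\<forall>m\<in>kys h. dv (E T) m" by (auto simp: PT_def MI_def)
  then show "h \<in> col V (MI V G) (monomial w)"
    using col_monomial[OF hR w] eq by (auto simp: col_def pring_iff)
next
  fix h :: "'k mpoly" assume "h \<in> col V (MI V G) (monomial w)"
  then have hR: "h \<in> Pring V" and "h * monomial w \<in> MI V G" by (auto simp: col_def)
  then have "\<forall>m\<in>kys h. dv G (m + w)" using col_monomial[OF hR w] by simp
  then show "h \<in> PT V T" using hR eq by (auto simp: PT_def MI_def pring_iff)
qed

lemma PT_col_iff:
  assumes w: "kys w \<subseteq> V" and eq: "(PT V T :: 'k::field mpoly set) = col V (MI V G) (monomial w)"
    and m: "kys m \<subseteq> V"
  shows "dv (E T) m \<longleftrightarrow> dv G (m + w)"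
proof -
  have "dv (E T) m \<longleftrightarrow> (monomial m :: 'k mpoly) \<in> PT V T"
    using m by (simp add: PT_def monomial_in_MI)
  also have "\<dots> \<longleftrightarrow> monomial m * monomial w \<in> (MI V G :: 'k mpoly set)"
  proof -
    have mp: "(monomial m :: 'k mpoly) \<in> Pring V" by (rule monomial_pring[OF m])
    then show ?thesis using eq by (simp add: col_def)
  qed
  also have "\<dots> \<longleftrightarrow> dv G (m + w)"
    using col_monomial[OF monomial_pring[OF m] w, of G] by simp
  finally show ?thesis .
qed

definition ybig :: "nat set \<Rightarrow> nat \<Rightarrow> mon" where
  "ybig A N = (\<Sum>j\<in>A. sng j N)"

lemma lookup_ybig: "finite A \<Longrightarrow> lkp (ybig A N) j = (if j \<in> A then N else 0)"
  by (simp add: ybig_def lookup_sum lookup_single when_def)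

lemma keys_ybig: "finite A \<Longrightarrow> kys (ybig A N) \<subseteq> A"
  by (auto simp: in_keys_iff lookup_ybig split: if_splits)

lemma lookup_le_sumkeys: "lkp (g::mon) j \<le> (\<Sum>x\<in>kys g. lkp g x)"
  by (cases "j \<in> kys g") (auto intro: member_le_sum simp: in_keys_iff)

lemma restr_lookup_W: "j \<in> W \<Longrightarrow> lkp (restr_mon W m) j = lkp m j"
  by (simp add: lookup_restr)

lemma mons_out: "g \<in> mons V \<Longrightarrow> j \<notin> V \<Longrightarrow> lkp g j = 0"
  by (auto simp: mons_def in_keys_iff)

lemma transfer_step:
  assumes WV: "W \<subseteq> V" and finV: "finite V" and G1: "G1 \<subseteq> mons V" and G0: "G0 \<subseteq> mons V"
    and hyp: "Ass (Pring V) (MI V G1 :: 'k::field mpoly set) \<subseteq> Ass (Pring V) (MI V G0)"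
  shows "Ass (Pring W) (MI W (restr_mon W ` G1) :: 'k mpoly set) \<subseteq> Ass (Pring W) (MI W (restr_mon W ` G0))"
proof
  fix P' :: "'k mpoly set"
  assume "P' \<in> Ass (Pring W) (MI W (restr_mon W ` G1))"
  then obtain f where P'pr: "prime_ideal_in (Pring W) P'" and fW: "f \<in> Pring W"
    and P'f: "P' = col W (MI W (restr_mon W ` G1)) f"
    by (auto simp: Ass_def col_def)
  have finW: "finite W" using finV WV finite_subset by blast
  have H1: "restr_mon W ` G1 \<subseteq> mons W" by (rule restr_mons)
  have H0: "restr_mon W ` G0 \<subseteq> mons W" by (rule restr_mons)
  have gr': "graded P'" using graded_col[OF H1 fW] P'pr P'f by simp
  define T where "T = {i\<in>W. var i \<in> P'}"
  have TW: "T \<subseteq> W" by (auto simp: T_def)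
  have finT: "finite T" using finW TW finite_subset by blast
  have P'T: "P' = PT W T" unfolding T_def by (rule graded_prime_PT[OF P'pr gr'])
  obtain w' where w'W: "kys w' \<subseteq> W" and P'w: "P' = col W (MI W (restr_mon W ` G1)) (monomial w')"
    using mono_witness[OF H1 fW P'pr P'f gr'] by blast
  have e1: "(PT W T :: 'k mpoly set) = col W (MI W (restr_mon W ` G1)) (monomial w')"
    using P'T P'w by simp
  have iff1: "dv (E T) m \<longleftrightarrow> dv (restr_mon W ` G1) (m + w')" if "kys m \<subseteq> W" for m
    using PT_col_iff[OF w'W e1 that] .
  have "\<forall>i\<in>T. \<exists>g\<in>G1. \<exists>d. sng i 1 + w' = restr_mon W g + d"
  proof
    fix i assume i: "i \<in> T"
    have "kys (sng i (1::nat)) \<subseteq> W" using i TW by auto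
    moreover have "dv (E T) (sng i 1)" unfolding dv_E using i by (intro bexI[of _ i]) (auto simp: lookup_single)
    ultimately have "dv (restr_mon W ` G1) (sng i 1 + w')" using iff1 by blast
    then show "\<exists>g\<in>G1. \<exists>d. sng i 1 + w' = restr_mon W g + d" by (auto simp: dv_def)
  qed
  then obtain gi where gi: "\<And>i. i \<in> T \<Longrightarrow> gi i \<in> G1 \<and> (\<exists>d. sng i 1 + w' = restr_mon W (gi i) + d)"
    by metis
  define N where "N = (\<Sum>i\<in>T. \<Sum>x\<in>kys (gi i). lkp (gi i) x)"
  have giN: "lkp (gi i) j \<le> N" if "i \<in> T" for i j
  proof -
    have "lkp (gi i) j \<le> (\<Sum>x\<in>kys (gi i). lkp (gi i) x)" by (rule lookup_le_sumkeys)
    also have "\<dots> \<le> N" unfolding N_def using that finT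
      by (intro member_le_sum[of i T "\<lambda>i. \<Sum>x\<in>kys (gi i). lkp (gi i) x"]) auto
    finally show ?thesis .
  qed
  define y where "y = ybig (V - W) N"
  have finVW: "finite (V - W)" using finV by simp
  have yV: "kys y \<subseteq> V" using keys_ybig[OF finVW] by (auto simp: y_def)
  have ry: "restr_mon W y = 0"
    by (rule poly_mapping_eqI) (simp add: lookup_restr y_def lookup_ybig[OF finVW])
  define w where "w = w' + y"
  have wV: "kys w \<subseteq> V" using w'W yV WV by (auto simp: w_def keys_mon_add)
  have iffV: "dv (E T) m \<longleftrightarrow> dv G1 (m + w)" if mV: "kys m \<subseteq> V" for m
  proof
    assume "dv G1 (m + w)"
    then obtain g d where g: "g \<in> G1" and gd: "m + w = g + d" by (auto simp: dv_def)
    have "restr_mon W (m + w) = restr_mon W g + restr_mon W d" by (simp add: gd restr_add)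
    then have "restr_mon W m + w' = restr_mon W g + restr_mon W d"
      by (simp add: w_def restr_add ry restr_id[OF w'W])
    then have "dv (restr_mon W ` G1) (restr_mon W m + w')" using g by (auto simp: dv_def)
    then have "dv (E T) (restr_mon W m)" using iff1 keys_restr by blast
    then obtain i where "i \<in> T" "lkp (restr_mon W m) i > 0" by (auto simp: dv_E)
    then show "dv (E T) m" using TW by (auto simp: dv_E lookup_restr split: if_splits)
  next
    assume "dv (E T) m"
    then obtain i where i: "i \<in> T" "lkp m i > 0" by (auto simp: dv_E)
    obtain d where d: "sng i 1 + w' = restr_mon W (gi i) + d" using gi[OF i(1)] by blast
    have giG: "gi i \<in> G1" using gi[OF i(1)] by blast
    have "\<exists>d. m + w = gi i + d"
    proof (rule dv_pointwise)
      fix j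
      show "lkp (gi i) j \<le> lkp (m + w) j"
      proof (cases "j \<in> W")
        case True
        have "lkp (gi i) j = lkp (restr_mon W (gi i)) j" using True by (simp add: lookup_restr)
        also have "\<dots> \<le> lkp (sng i 1 + w') j" unfolding d by (simp add: lookup_add)
        also have "\<dots> \<le> lkp m j + lkp w' j" using i(2)
          by (auto simp: lookup_add lookup_single when_def)
        also have "\<dots> \<le> lkp (m + w) j" by (simp add: w_def lookup_add)
        finally show ?thesis .
      next
        case False
        show ?thesis
        proof (cases "j \<in> V")
          case True
          have "lkp (gi i) j \<le> N" by (rule giN[OF i(1)])
          also have "\<dots> = lkp y j" using True False by (simp add: y_def lookup_ybig[OF finVW])
          also have "\<dots> \<le> lkp (m + w) j" by (simp add: w_def lookup_add)
          finally show ?thesis .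
        next
          case False
          then show ?thesis using mons_out[of "gi i" V j] giG G1 by auto
        qed
      qed
    qed
    then show "dv G1 (m + w)" using giG by (auto simp: dv_def)
  qed
  have PTeq: "(PT V T :: 'k mpoly set) = col V (MI V G1) (monomial w)"
    by (rule PT_col_eq[OF wV iffV])
  have TV: "T \<subseteq> V" using TW WV by blast
  have "PT V T \<in> Ass (Pring V) (MI V G1 :: 'k mpoly set)"
  proof -
    have pr: "prime_ideal_in (Pring V) (PT V T :: 'k mpoly set)" by (rule PT_prime[OF TV])
    have mw: "(monomial w :: 'k mpoly) \<in> Pring V" by (rule monomial_pring[OF wV])
    show ?thesis unfolding Ass_def
      by (rule CollectI, rule conjI[OF pr], rule bexI[OF _ mw]) (simp add: PTeq col_def)
  qed
  then have "PT V T \<in> Ass (Pring V) (MI V G0 :: 'k mpoly set)" using hyp by blast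
  then obtain g where PTpr: "prime_ideal_in (Pring V) (PT V T :: 'k mpoly set)" and gV: "g \<in> Pring V"
    and PTg: "(PT V T :: 'k mpoly set) = col V (MI V G0) g"
    by (auto simp: Ass_def col_def)
  have grV: "graded (PT V T :: 'k mpoly set)" using graded_col[OF G0 gV] PTpr PTg by simp
  obtain w2 where w2V: "kys w2 \<subseteq> V" and PTw2: "(PT V T :: 'k mpoly set) = col V (MI V G0) (monomial w2)"
    using mono_witness[OF G0 gV PTpr PTg grV] by blast
  have iff0: "dv (E T) m \<longleftrightarrow> dv G0 (m + w2)" if "kys m \<subseteq> V" for m
    using PT_col_iff[OF w2V PTw2 that] .
  have rw2W: "kys (restr_mon W w2) \<subseteq> W" by (rule keys_restr)
  have iffW: "dv (E T) m \<longleftrightarrow> dv (restr_mon W ` G0) (m + restr_mon W w2)" if mW: "kys m \<subseteq> W" for m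
  proof
    assume "dv (E T) m"
    then have "dv G0 (m + w2)" using iff0 mW WV by blast
    then obtain g d where g: "g \<in> G0" and gd: "m + w2 = g + d" by (auto simp: dv_def)
    have "restr_mon W (m + w2) = restr_mon W g + restr_mon W d" by (simp add: gd restr_add)
    then have "m + restr_mon W w2 = restr_mon W g + restr_mon W d"
      by (simp add: restr_add restr_id[OF mW])
    then show "dv (restr_mon W ` G0) (m + restr_mon W w2)" using g by (auto simp: dv_def)
  next
    assume "dv (restr_mon W ` G0) (m + restr_mon W w2)"
    then obtain g d where g: "g \<in> G0" and gd: "m + restr_mon W w2 = restr_mon W g + d"
      by (auto simp: dv_def)
    define N' where "N' = (\<Sum>x\<in>kys g. lkp g x)"
    define y' where "y' = ybig (V - W) N'"
    have y'V: "kys y' \<subseteq> V" using keys_ybig[OF finVW] by (auto simp: y'_def)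
    have myV: "kys (m + y') \<subseteq> V" using mW WV y'V by (auto simp: keys_mon_add)
    have "\<exists>d. (m + y') + w2 = g + d"
    proof (rule dv_pointwise)
      fix j
      show "lkp g j \<le> lkp ((m + y') + w2) j"
      proof (cases "j \<in> W")
        case True
        have "lkp g j = lkp (restr_mon W g) j" using True by (simp add: lookup_restr)
        also have "\<dots> \<le> lkp (m + restr_mon W w2) j" unfolding gd by (simp add: lookup_add)
        also have "\<dots> \<le> lkp ((m + y') + w2) j" using True by (simp add: lookup_add lookup_restr)
        finally show ?thesis .
      next
        case False
        show ?thesis
        proof (cases "j \<in> V")
          case True
          have "lkp g j \<le> N'" unfolding N'_def by (rule lookup_le_sumkeys)
          also have "\<dots> = lkp y' j" using True False by (simp add: y'_def lookup_ybig[OF finVW])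
          also have "\<dots> \<le> lkp ((m + y') + w2) j" by (simp add: lookup_add)
          finally show ?thesis .
        next
          case False
          then show ?thesis using mons_out[of g V j] g G0 by auto
        qed
      qed
    qed
    then have "dv G0 ((m + y') + w2)" using g by (auto simp: dv_def)
    then have "dv (E T) (m + y')" using iff0[OF myV] by simp
    then obtain i where i: "i \<in> T" "lkp (m + y') i > 0" by (auto simp: dv_E)
    have "lkp y' i = 0" using i(1) TW by (auto simp: y'_def lookup_ybig[OF finVW])
    then show "dv (E T) m" using i by (auto simp: dv_E lookup_add)
  qed
  have P'eq: "P' = col W (MI W (restr_mon W ` G0)) (monomial (restr_mon W w2))"
    using PT_col_eq[OF rw2W iffW] P'T by simp
  show "P' \<in> Ass (Pring W) (MI W (restr_mon W ` G0))"
  proof -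
    have mw: "(monomial (restr_mon W w2) :: 'k mpoly) \<in> Pring W" by (rule monomial_pring[OF rw2W])
    show ?thesis unfolding Ass_def
      by (rule CollectI, rule conjI[OF P'pr], rule bexI[OF _ mw]) (simp add: P'eq col_def)
  qed
qed

theorem theorem3p20:
  fixes I :: "'k::field mpoly set" and n :: nat and W :: "nat set"
  assumes "monomial_ideal {1..n} I"
    and "W \<subseteq> {1..n}"
    and "I \<subseteq> monomial_prime {1..n} W"
    and "copersistent (Pring {1..n}) I"
  shows "copersistent (Pring W) (mon_loc W I)"
proof -
  obtain G where G: "G \<subseteq> mons {1..n}" and IG: "I = MI {1..n} G"
    using monomial_ideal_MI[OF assms(1)] by blast
  have loc: "mon_loc W I = MI W (restr_mon W ` G)"
    unfolding mon_loc_def IG by (rule loc_map_MI[OF assms(2) G])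
  have powV: "ideal_pow (Pring {1..n}) I k = MI {1..n} (Gp G k)" for k
    unfolding IG by (rule ideal_pow_MI[OF G])
  have powW: "ideal_pow (Pring W) (mon_loc W I) k = MI W (restr_mon W ` Gp G k)" for k
    unfolding loc using ideal_pow_MI[OF restr_mons, of W G k] by (simp add: Gp_restr)
  show ?thesis
    unfolding copersistent_def
  proof (intro allI impI)
    fix k :: nat assume k: "k \<ge> 1"
    have hyp: "Ass (Pring {1..n}) (MI {1..n} (Gp G (Suc k)) :: 'k mpoly set)
        \<subseteq> Ass (Pring {1..n}) (MI {1..n} (Gp G k))"
      using assms(4) k unfolding copersistent_def powV by blast
    show "Ass (Pring W) (ideal_pow (Pring W) (mon_loc W I) (Suc k)) \<subseteq> Ass (Pring W) (ideal_pow (Pring W) (mon_loc W I) k)"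
      unfolding powW
      by (rule transfer_step[OF assms(2) finite_atLeastAtMost Gp_mons[OF G] Gp_mons[OF G] hyp])
  qed
qed

end
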